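(* For every $m\ge1$, $\mathrm{PBTD}(\mathrm{QR}^1_{\infty,m})=2$. If $z\ge2$, then $\mathrm{PBTD}(\mathrm{QR}^z_{\infty,m})\ge2$.
   Context: Fix a countably infinite set $X$ of variables and an alphabet $\Sigma$ (finite or countably infinite, disjoint from $X$), $z=|\Sigma|$. A pattern is a nonempty finite string over $X\cup\Sigma$. A substitution is a morphism $h:(X\cup\Sigma)^*\to\Sigma^*$ fixing letters; $L(\pi)$ (erasing pattern language) is the set of all $h(\pi)$; patterns with equal languages are identified. A pattern is $m$-quasi-regular if every variable occurring in it occurs exactly $m$ times (patterns without variables are included); $\mathrm{QR}^z_{\infty,m}$ is the class of $m$-quasi-regular patterns over an alphabet of size $z$. A labelled example is $(w,\pm)$ with $w\in\Sigma^*$; a teaching set for $\pi$ w.r.t. a class $\Pi$ is a set $T$ of labelled examples consistent with $\pi$ such that every $\tau\in\Pi$ consistent with $T$ has $L(\tau)=L(\pi)$. For a strict partial order $\prec$ on $\Pi$, a teaching set for $\pi$ w.r.t. $(\Pi,\prec)$ is a teaching set for $\pi$ w.r.t. $\Pi\setminus\{\pi':\pi'\prec\pi\}$; $\mathrm{PBTD}(\Pi,\prec)$ is the supremum over $\pi\in\Pi$ of the minimum size of such sets, and $\mathrm{PBTD}(\Pi)=\inf_\prec\mathrm{PBTD}(\Pi,\prec)$. *)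

theory Defs
  imports Main "HOL-Library.Extended_Nat" "HOL-Library.Countable_Set"
begin

text \<open>Variables are natural numbers (Inl x), letters are elements of the alphabet
  Sig of type 'a (Inr a). A pattern is a nonempty list over this disjoint union.\<close>

definition is_pattern :: "'a set \<Rightarrow> (nat + 'a) list \<Rightarrow> bool" where
  "is_pattern Sig p \<longleftrightarrow> p \<noteq> [] \<and> (\<forall>a. Inr a \<in> set p \<longrightarrow> a \<in> Sig)"

definition subst_app :: "(nat \<Rightarrow> 'a list) \<Rightarrow> (nat + 'a) list \<Rightarrow> 'a list" where
  "subst_app h p = concat (map (case_sum h (\<lambda>a. [a])) p)"

text \<open>Erasing pattern language.\<close>
definition lang :: "'a set \<Rightarrow> (nat + 'a) list \<Rightarrow> 'a list set" where
  "lang Sig p = {subst_app h p | h. \<forall>x. h x \<in> lists Sig}"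

definition quasi_regular :: "nat \<Rightarrow> (nat + 'a) list \<Rightarrow> bool" where
  "quasi_regular m p \<longleftrightarrow> (\<forall>x. Inl x \<in> set p \<longrightarrow> count_list p (Inl x) = m)"

text \<open>The class QR of m-quasi-regular patterns, with patterns of equal languages
  identified: represented as the set of their languages.\<close>
definition QR_class :: "'a set \<Rightarrow> nat \<Rightarrow> 'a list set set" where
  "QR_class Sig m = {lang Sig p | p. is_pattern Sig p \<and> quasi_regular m p}"

definition consistent :: "'a set \<Rightarrow> ('a list \<times> bool) set \<Rightarrow> 'a list set \<Rightarrow> bool" where
  "consistent Sig T L \<longleftrightarrow> T \<subseteq> lists Sig \<times> UNIV \<and> (\<forall>(w, b) \<in> T. (w \<in> L) = b)"

definition teaching_set ::
  "'a set \<Rightarrow> 'a list set set \<Rightarrow> 'a list set \<Rightarrow> ('a list \<times> bool) set \<Rightarrow> bool" where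
  "teaching_set Sig C L T \<longleftrightarrow> consistent Sig T L \<and> (\<forall>L' \<in> C. consistent Sig T L' \<longrightarrow> L' = L)"

text \<open>Minimum size of a teaching set (infinity if none exists / only infinite ones).\<close>
definition TD :: "'a set \<Rightarrow> 'a list set set \<Rightarrow> 'a list set \<Rightarrow> enat" where
  "TD Sig C L = (INF T \<in> {T. teaching_set Sig C L T}. if finite T then enat (card T) else \<infinity>)"

definition strict_po_on :: "'b set \<Rightarrow> ('b \<Rightarrow> 'b \<Rightarrow> bool) \<Rightarrow> bool" where
  "strict_po_on C R \<longleftrightarrow> (\<forall>x\<in>C. \<not> R x x) \<and> (\<forall>x\<in>C. \<forall>y\<in>C. \<forall>z\<in>C. R x y \<longrightarrow> R y z \<longrightarrow> R x z)"

definition PBTD_ord :: "'a set \<Rightarrow> 'a list set set \<Rightarrow> ('a list set \<Rightarrow> 'a list set \<Rightarrow> bool) \<Rightarrow> enat" where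
  "PBTD_ord Sig C R = (SUP L \<in> C. TD Sig (C - {L'. R L' L}) L)"

definition PBTD :: "'a set \<Rightarrow> 'a list set set \<Rightarrow> enat" where
  "PBTD Sig C = (INF R \<in> {R. strict_po_on C R}. PBTD_ord Sig C R)"

end

theory Submission
  imports Defs
begin

lemma subst_app_Cons[simp]:
  "subst_app h (e # p) = case_sum h (\<lambda>a. [a]) e @ subst_app h p"
  by (simp add: subst_app_def)

lemma subst_app_Nil[simp]: "subst_app h [] = []"
  by (simp add: subst_app_def)

lemma subst_app_append[simp]: "subst_app h (p @ q) = subst_app h p @ subst_app h q"
  by (simp add: subst_app_def)

lemma subst_app_letters[simp]: "subst_app h (map Inr u) = u"
  by (induction u) auto

lemma subst_app_novar:
  "(\<forall>x. Inl x \<notin> set p) \<Longrightarrow> subst_app h p = subst_app g p"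
  by (induction p) (auto split: sum.splits)

lemma subst_app_lists0:
  "\<forall>x. h x \<in> lists Sig \<Longrightarrow> (\<forall>a. Inr a \<in> set p \<longrightarrow> a \<in> Sig) \<Longrightarrow> subst_app h p \<in> lists Sig"
proof (induction p)
  case Nil then show ?case by simp
next
  case (Cons e p)
  then show ?case by (cases e) (auto simp: in_lists_conv_set)
qed

lemma subst_app_lists:
  "\<forall>x. h x \<in> lists Sig \<Longrightarrow> is_pattern Sig p \<Longrightarrow> subst_app h p \<in> lists Sig"
  unfolding is_pattern_def using subst_app_lists0 by blast

lemma lang_letters: "lang Sig (map Inr u) = {u}"
  unfolding lang_def by (auto intro!: exI[of _ "\<lambda>_. []"])

lemma lang_novar:
  assumes "\<forall>x. Inl x \<notin> set p"
  shows "lang Sig p = {subst_app (\<lambda>_. []) p}"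
  unfolding lang_def using subst_app_novar[OF assms] by (auto intro!: exI[of _ "\<lambda>_. []"])

lemma lang_sub: "is_pattern Sig p \<Longrightarrow> lang Sig p \<subseteq> lists Sig"
  unfolding lang_def using subst_app_lists by blast

lemma length_subst_ge:
  "Inl x \<in> set p \<Longrightarrow> length (h x) \<le> length (subst_app h p)"
  by (induction p) auto

lemma lang_var_infinite:
  assumes "Inl x \<in> set p" "a \<in> Sig"
  shows "infinite (lang Sig p)"
proof
  assume fin: "finite (lang Sig p)"
  define N where "N = Max (length ` lang Sig p)"
  define h where "h = (\<lambda>y::nat. replicate (Suc N) a)"
  have "\<forall>y. h y \<in> lists Sig" using assms(2) by (simp add: h_def in_lists_conv_set)
  then have mem: "subst_app h p \<in> lang Sig p" unfolding lang_def by blast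
  have "length (subst_app h p) \<le> N" unfolding N_def using fin mem by simp
  moreover have "Suc N \<le> length (subst_app h p)"
    using length_subst_ge[OF assms(1), of h] by (simp add: h_def)
  ultimately show False by simp
qed

lemma TD_small:
  assumes "TD Sig D L < 2"
  shows "\<exists>T. teaching_set Sig D L T \<and> finite T \<and> card T \<le> 1"
proof -
  have "\<exists>T\<in>{T. teaching_set Sig D L T}. (if finite T then enat (card T) else \<infinity>) < 2"
    using assms unfolding TD_def by (simp only: INF_less_iff)
  then obtain T where T: "teaching_set Sig D L T"
    and lt: "(if finite T then enat (card T) else \<infinity>) < 2" by blast
  from lt have "finite T" "card T \<le> 1"
    by (auto split: if_splits simp: numeral_eq_enat)
  with T show ?thesis by blast
qed

lemma ok_from_TD:
  assumes "TD Sig (C - {L'. R L' L}) L < 2"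
  shows "\<exists>w\<in>lists Sig. \<forall>L'\<in>C. L' \<noteq> L \<longrightarrow> (w\<in>L') = (w\<in>L) \<longrightarrow> R L' L"
proof -
  obtain T where T: "teaching_set Sig (C - {L'. R L' L}) L T" "finite T" "card T \<le> 1"
    using TD_small[OF assms] by blast
  have "T = {} \<or> (\<exists>t. T = {t})"
    using T(2,3) card_le_Suc0_iff_eq[OF T(2)] by (metis One_nat_def all_not_in_conv insertI1 subsetI subset_singletonD)
  then show ?thesis
  proof
    assume "T = {}"
    with T(1) have "\<forall>L'\<in>C. L' \<noteq> L \<longrightarrow> R L' L"
      unfolding teaching_set_def consistent_def by auto
    then show ?thesis by (intro bexI[of _ "[]"]) auto
  next
    assume "\<exists>t. T = {t}"
    then obtain w b where Tw: "T = {(w,b)}" by auto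
    with T(1) have w: "w \<in> lists Sig" "(w \<in> L) = b"
      unfolding teaching_set_def consistent_def by auto
    have "\<forall>L'\<in>C. L' \<noteq> L \<longrightarrow> (w\<in>L') = (w\<in>L) \<longrightarrow> R L' L"
    proof (intro ballI impI)
      fix L' assume "L' \<in> C" "L' \<noteq> L" "(w\<in>L') = (w\<in>L)"
      show "R L' L"
      proof (rule ccontr)
        assume "\<not> R L' L"
        then have "L' \<in> C - {L'. R L' L}" using \<open>L' \<in> C\<close> by simp
        moreover have "consistent Sig T L'"
          using Tw w \<open>(w\<in>L') = (w\<in>L)\<close> unfolding consistent_def by auto
        ultimately have "L' = L" using T(1) unfolding teaching_set_def by blast
        with \<open>L' \<noteq> L\<close> show False by simp
      qed
    qed
    with w show ?thesis by blast
  qed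
qed

lemma spo_asym:
  assumes "strict_po_on C R" "x \<in> C" "y \<in> C" "R x y" "R y x"
  shows False
  using assms unfolding strict_po_on_def by blast

lemma singleton_in_QR:
  assumes "u \<noteq> []" "u \<in> lists Sig"
  shows "{u} \<in> QR_class Sig m"
proof -
  have "is_pattern Sig (map Inr u)" using assms
    by (auto simp: is_pattern_def in_lists_conv_set)
  moreover have "quasi_regular m (map Inr u)" by (auto simp: quasi_regular_def)
  moreover have "{u} = lang Sig (map Inr u)" by (simp add: lang_letters)
  ultimately show ?thesis unfolding QR_class_def by blast
qed

lemma count_rep: "count_list (replicate k x) x = k"
  by (induction k) auto

lemma subst_rep_var: "subst_app h (replicate k (Inl x)) = concat (replicate k (h x))"
  by (induction k) auto

lemma subst_rep_letter: "subst_app h (replicate k (Inr a)) = replicate k a"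
  by (induction k) auto

lemma concat_rep_single: "concat (replicate k [a]) = replicate k a"
  by (induction k) auto

lemma lower:
  fixes Sig :: "'a set" and a :: 'a
  assumes a: "a \<in> Sig" and m: "m \<ge> 1" and po: "strict_po_on (QR_class Sig m) R"
  shows "\<exists>L\<in>QR_class Sig m. \<not> TD Sig (QR_class Sig m - {L'. R L' L}) L < 2"
proof (rule ccontr)
  let ?C = "QR_class Sig m"
  assume "\<not> ?thesis"
  then have ok: "\<forall>L\<in>?C. \<exists>w\<in>lists Sig. \<forall>L'\<in>?C. L'\<noteq>L \<longrightarrow> (w\<in>L') = (w\<in>L) \<longrightarrow> R L' L"
    using ok_from_TD by blast
  define good where "good u \<longleftrightarrow> (\<forall>L'\<in>?C. L' \<noteq> {u} \<longrightarrow> u \<in> L' \<longrightarrow> R L' {u})" for u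
  define B where "B = {u. u \<noteq> [] \<and> u \<in> lists Sig \<and> \<not> good u}"
  have badw: "\<forall>u\<in>B. \<exists>v. v \<noteq> u \<and> (\<forall>L'\<in>?C. L' \<noteq> {u} \<longrightarrow> v \<notin> L' \<longrightarrow> R L' {u})"
  proof
    fix u assume "u \<in> B"
    then have u: "u \<noteq> []" "u \<in> lists Sig" "\<not> good u" by (auto simp: B_def)
    from ok singleton_in_QR[OF u(1,2)] obtain w where
      w: "w \<in> lists Sig" "\<forall>L'\<in>?C. L'\<noteq>{u} \<longrightarrow> (w\<in>L') = (w\<in>{u}) \<longrightarrow> R L' {u}"
      by blast
    show "\<exists>v. v \<noteq> u \<and> (\<forall>L'\<in>?C. L' \<noteq> {u} \<longrightarrow> v \<notin> L' \<longrightarrow> R L' {u})"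
    proof (cases "w = u")
      case True then have "good u" using w unfolding good_def by auto
      with u show ?thesis by simp
    next
      case False then show ?thesis using w by (intro exI[of _ w]) auto
    qed
  qed
  then obtain vw where vw: "\<forall>u\<in>B. vw u \<noteq> u \<and> (\<forall>L'\<in>?C. L' \<noteq> {u} \<longrightarrow> vw u \<notin> L' \<longrightarrow> R L' {u})"
    by metis
  have Bsing: "{u} \<in> ?C" if "u \<in> B" for u using that singleton_in_QR by (auto simp: B_def)
  have key: "u = vw w \<or> w = vw u" if uw: "u\<in>B" "w\<in>B" "u\<noteq>w" for u w
  proof (rule ccontr)
    assume nn: "\<not> (u = vw w \<or> w = vw u)"
    have "R {u} {w}" using vw uw Bsing nn by auto
    moreover have "R {w} {u}" using vw uw Bsing nn by auto
    ultimately show False using spo_asym[OF po] Bsing uw by blast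
  qed
  have finB: "finite B"
  proof (cases "B = {}")
    case True thus ?thesis by simp
  next
    case False then obtain w0 where w0: "w0 \<in> B" by blast
    let ?S = "{u\<in>B. u \<noteq> w0 \<and> u \<noteq> vw w0}"
    have S1: "\<forall>u\<in>?S. \<forall>u'\<in>?S. u = u'"
    proof (intro ballI, rule ccontr)
      fix u u' assume uS: "u\<in>?S" "u'\<in>?S" "u \<noteq> u'"
      have a1: "vw u = w0" using key[of u w0] uS w0 by auto
      have a2: "vw u' = w0" using key[of u' w0] uS w0 by auto
      show False using key[of u u'] uS a1 a2 by auto
    qed
    have "?S \<subseteq> {SOME x. x \<in> ?S}"
    proof
      fix x assume "x \<in> ?S"
      then have "(SOME x. x \<in> ?S) \<in> ?S" by (rule someI)
      with \<open>x \<in> ?S\<close> S1 show "x \<in> {SOME x. x \<in> ?S}" by blast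
    qed
    then have "finite ?S" using finite_subset by blast
    moreover have "B \<subseteq> ?S \<union> {w0, vw w0}" by auto
    ultimately show ?thesis using finite_subset by auto
  qed
  define n where "n = Suc (Max (insert 0 (length ` B)))"
  have n1: "n \<ge> 1" by (simp add: n_def)
  have lenB: "length u < n" if "u \<in> B" for u
  proof -
    have "length u \<le> Max (insert 0 (length ` B))" using that finB by simp
    then show ?thesis by (simp add: n_def)
  qed
  define p where "p = replicate n (Inr a) @ replicate m (Inl (0::nat))"
  define K where "K = lang Sig p"
  have pat: "is_pattern Sig p" using n1 a unfolding p_def is_pattern_def by auto
  have qr: "quasi_regular m p" unfolding quasi_regular_def p_def
    by (auto simp: count_rep)
  have KC: "K \<in> ?C" unfolding K_def QR_class_def using pat qr by blast
  have substp: "subst_app h p = replicate n a @ concat (replicate m (h 0))" for h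
    by (simp add: p_def subst_rep_var subst_rep_letter)
  have Kw: "w \<in> lists Sig \<and> n \<le> length w" if "w \<in> K" for w
  proof -
    from that obtain h where "w = subst_app h p" unfolding K_def lang_def by blast
    then have "n \<le> length w" by (simp add: substp)
    moreover have "w \<in> lists Sig" using that lang_sub[OF pat] unfolding K_def by blast
    ultimately show ?thesis by simp
  qed
  have goodK: "good w" if "w \<in> K" for w
  proof -
    have "w \<notin> B" using Kw[OF that] lenB by force
    moreover have "w \<noteq> []" using Kw[OF that] n1 by auto
    ultimately show ?thesis using Kw[OF that] unfolding B_def by blast
  qed
  have u0: "replicate n a \<in> K"
  proof -
    have "subst_app (\<lambda>_. []) p = replicate n a" by (simp add: substp)
    then show ?thesis unfolding K_def lang_def by (auto intro!: exI[of _ "\<lambda>_. []"])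
  qed
  have u1: "replicate (n+m) a \<in> K"
  proof -
    have "subst_app (\<lambda>_. [a]) p = replicate (n+m) a"
      by (simp add: substp concat_rep_single replicate_add)
    moreover have "\<forall>x. (\<lambda>_. [a]) x \<in> lists Sig" using a by simp
    ultimately show ?thesis unfolding K_def lang_def by (auto intro!: exI[of _ "\<lambda>_. [a]"])
  qed
  have Kne: "K \<noteq> {w}" for w
  proof
    assume "K = {w}"
    then have "replicate n a = replicate (n+m) a" using u0 u1 by auto
    then have "length (replicate n a) = length (replicate (n+m) a)" by metis
    then show False using m by simp
  qed
  from ok KC obtain w where
    w: "w \<in> lists Sig" "\<forall>L'\<in>?C. L'\<noteq>K \<longrightarrow> (w\<in>L') = (w\<in>K) \<longrightarrow> R L' K"
    by blast
  show False
  proof (cases "w \<in> K")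
    case True
    have wne: "w \<noteq> []" using Kw[OF True] n1 by auto
    have wC: "{w} \<in> ?C" using singleton_in_QR[OF wne w(1)] .
    have "R K {w}" using goodK[OF True] KC True Kne unfolding good_def by auto
    moreover have "{w} \<noteq> K" using Kne[of w] by (rule not_sym)
    then have "R {w} K" using w(2) wC True by auto
    ultimately show False using spo_asym[OF po KC wC] by blast
  next
    case False
    let ?u = "replicate n a"
    have une: "?u \<noteq> []" using n1 by simp
    have uC: "{?u} \<in> ?C" using singleton_in_QR[OF une] Kw[OF u0] by blast
    have "R K {?u}" using goodK[OF u0] KC u0 Kne unfolding good_def by auto
    moreover have "{?u} \<noteq> K" using Kne[of ?u] by (rule not_sym)
    then have "R {?u} K" using w(2) uC False u0 by auto
    ultimately show False using spo_asym[OF po KC uC] by blast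
  qed
qed

lemma len_subst:
  "length (subst_app h p) = sum_list (map (\<lambda>e. case e of Inl x \<Rightarrow> length (h x) | Inr _ \<Rightarrow> 1) p)"
  by (induction p) (auto split: sum.splits)

lemma len_subst_qr:
  assumes "quasi_regular m p"
  shows "length (subst_app h p) = length (subst_app (\<lambda>_. []) p)
     + m * (\<Sum>e\<in>set p. case e of Inl x \<Rightarrow> length (h x) | Inr _ \<Rightarrow> 0)"
proof -
  define g where "g = (\<lambda>e. case e of Inl x \<Rightarrow> length (h x) | Inr (_::'a) \<Rightarrow> (0::nat))"
  define f0 where "f0 = (\<lambda>e. case e of Inl (x::nat) \<Rightarrow> (0::nat) | Inr (_::'a) \<Rightarrow> 1)"
  have split: "(\<lambda>e. case e of Inl x \<Rightarrow> length (h x) | Inr _ \<Rightarrow> 1) = (\<lambda>e. f0 e + g e)"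
    by (auto simp: f0_def g_def split: sum.splits)
  have e0: "length (subst_app (\<lambda>_. []) p) = sum_list (map f0 p)"
    unfolding len_subst f0_def by (rule arg_cong[where f=sum_list]) (auto split: sum.splits)
  have "sum_list (map g p) = (\<Sum>e\<in>set p. count_list p e * g e)"
    by (rule sum_list_map_eq_sum_count)
  also have "\<dots> = (\<Sum>e\<in>set p. m * g e)"
  proof (rule sum.cong)
    fix e assume ep: "e \<in> set p"
    show "count_list p e * g e = m * g e"
    proof (cases e)
      case (Inl x)
      then have "count_list p e = m" using assms ep unfolding quasi_regular_def by simp
      then show ?thesis by simp
    next
      case (Inr b)
      then show ?thesis by (simp add: g_def)
    qed
  qed simp
  also have "\<dots> = m * (\<Sum>e\<in>set p. g e)" by (simp add: sum_distrib_left)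
  finally have "sum_list (map g p) = m * (\<Sum>e\<in>set p. g e)" .
  then show ?thesis
    unfolding len_subst[of h] split sum_list_addf e0 by (simp add: g_def)
qed

lemma unary_word: "w \<in> lists {a} \<Longrightarrow> w = replicate (length w) a"
  by (metis in_lists_conv_set replicate_length_same singletonD subsetD)

lemma unary_lang:
  assumes x0: "Inl x0 \<in> set p" and qr: "quasi_regular m p" and pat: "is_pattern {a} p"
  shows "lang {a} p = {replicate (length (subst_app (\<lambda>_. []) p) + m*j) a | j. True}"
proof
  show "lang {a} p \<subseteq> {replicate (length (subst_app (\<lambda>_. []) p) + m*j) a | j. True}"
  proof
    fix w assume "w \<in> lang {a} p"
    then obtain h where h: "\<forall>x. h x \<in> lists {a}" "w = subst_app h p" unfolding lang_def by blast
    have "w \<in> lists {a}" using \<open>w \<in> lang {a} p\<close> lang_sub[OF pat] by blast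
    then have "w = replicate (length w) a" by (rule unary_word)
    then show "w \<in> {replicate (length (subst_app (\<lambda>_. []) p) + m*j) a | j. True}"
      using len_subst_qr[OF qr, of h] h(2) by auto
  qed
next
  show "{replicate (length (subst_app (\<lambda>_. []) p) + m*j) a | j. True} \<subseteq> lang {a} p"
  proof
    fix w assume "w \<in> {replicate (length (subst_app (\<lambda>_. []) p) + m*j) a | j. True}"
    then obtain j where wj: "w = replicate (length (subst_app (\<lambda>_. []) p) + m*j) a" by blast
    define h where "h = (\<lambda>x. if x = x0 then replicate j a else [])"
    have hl: "\<forall>x. h x \<in> lists {a}" by (simp add: h_def in_lists_conv_set)
    have "(\<Sum>e\<in>set p. case e of Inl x \<Rightarrow> length (h x) | Inr _ \<Rightarrow> 0)
        = (\<Sum>e\<in>set p. if e = Inl x0 then j else 0)"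
      by (rule sum.cong) (auto simp: h_def split: sum.splits)
    also have "\<dots> = j" using x0 by simp
    finally have len: "length (subst_app h p) = length (subst_app (\<lambda>_. []) p) + m*j"
      using len_subst_qr[OF qr, of h] by simp
    have "subst_app h p \<in> lists {a}" using subst_app_lists[OF hl pat] .
    then have "subst_app h p = w" using unary_word len wj by metis
    then show "w \<in> lang {a} p" using hl unfolding lang_def by blast
  qed
qed

definition R0 :: "'a list set \<Rightarrow> 'a list set \<Rightarrow> bool" where
  "R0 L' L \<longleftrightarrow> infinite L' \<and> (finite L \<or> L \<subset> L')"

lemma R0_spo: "strict_po_on C R0"
  unfolding strict_po_on_def R0_def by auto

lemma TD_le:
  assumes "teaching_set Sig D L T" "finite T" "card T \<le> 2"
  shows "TD Sig D L \<le> 2"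
proof -
  have "TD Sig D L \<le> (if finite T then enat (card T) else \<infinity>)"
    unfolding TD_def using assms(1) by (intro INF_lower) simp
  also have "\<dots> \<le> 2" using assms(2,3) by (simp add: numeral_eq_enat)
  finally show ?thesis .
qed

lemma QR_cases:
  assumes "L \<in> QR_class Sig m"
  obtains p where "is_pattern Sig p" "quasi_regular m p" "L = lang Sig p"
  using assms unfolding QR_class_def by blast

lemma fin_QR_single:
  assumes "L \<in> QR_class Sig m" "finite L" "a \<in> Sig"
  shows "L = {subst_app (\<lambda>_. []) (SOME p. is_pattern Sig p \<and> quasi_regular m p \<and> L = lang Sig p)}
     \<and> (\<exists>w. L = {w})"
proof -
  let ?p = "SOME p. is_pattern Sig p \<and> quasi_regular m p \<and> L = lang Sig p"
  have "\<exists>p. is_pattern Sig p \<and> quasi_regular m p \<and> L = lang Sig p"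
    using assms(1) unfolding QR_class_def by blast
  then have P: "is_pattern Sig ?p \<and> quasi_regular m ?p \<and> L = lang Sig ?p" by (rule someI_ex)
  have "\<forall>x. Inl x \<notin> set ?p"
    using lang_var_infinite[OF _ assms(3)] P assms(2) by metis
  then have "L = {subst_app (\<lambda>_. []) ?p}" using P lang_novar by metis
  then show ?thesis by blast
qed

lemma upper:
  fixes a :: 'a
  assumes m: "m \<ge> 1"
  shows "PBTD_ord {a} (QR_class {a} m) R0 \<le> 2"
  unfolding PBTD_ord_def
proof (rule SUP_least)
  let ?C = "QR_class {a} m"
  fix L assume LC: "L \<in> ?C"
  show "TD {a} (?C - {L'. R0 L' L}) L \<le> 2"
  proof (cases "finite L")
    case True
    then obtain w where Lw: "L = {w}" using fin_QR_single[OF LC] by blast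
    obtain p where p: "is_pattern {a} p" "L = lang {a} p" using LC by (rule QR_cases)
    have wl: "w \<in> lists {a}" using lang_sub[OF p(1)] p(2) Lw by blast
    have "teaching_set {a} (?C - {L'. R0 L' L}) L {(w, True)}"
      unfolding teaching_set_def consistent_def
    proof (intro conjI ballI impI)
      show "{(w, True)} \<subseteq> lists {a} \<times> UNIV" using wl by simp
    next
      fix L' assume L'C: "L' \<in> ?C - {L'. R0 L' L}"
        and c: "{(w, True)} \<subseteq> lists {a} \<times> UNIV \<and> (\<forall>(v, b)\<in>{(w, True)}. (v \<in> L') = b)"
      have "finite L'" using L'C True unfolding R0_def by auto
      then obtain w' where "L' = {w'}" using fin_QR_single[of L' "{a}" m a] L'C by blast
      with c Lw show "L' = L" by auto
    qed (use Lw in auto)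
    then show ?thesis by (rule TD_le) auto
  next
    case False
    obtain p where p: "is_pattern {a} p" "quasi_regular m p" "L = lang {a} p" using LC by (rule QR_cases)
    obtain x0 where x0: "Inl x0 \<in> set p"
      using lang_novar[of p "{a}"] p(3) False by (metis finite.emptyI finite.insertI)
    define k where "k = length (subst_app (\<lambda>_. []) p)"
    have Lk: "L = {replicate (k + m*j) a | j. True}"
      using unary_lang[OF x0 p(2) p(1)] p(3) k_def by simp
    let ?T = "{(replicate k a, True), (replicate (k+m) a, True)}"
    have r0: "replicate k a \<in> L" unfolding Lk by (rule CollectI, rule exI[of _ 0]) simp
    have r1: "replicate (k+m) a \<in> L" unfolding Lk by (rule CollectI, rule exI[of _ 1]) simp
    have "teaching_set {a} (?C - {L'. R0 L' L}) L ?T"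
      unfolding teaching_set_def consistent_def
    proof (intro conjI)
      show "?T \<subseteq> lists {a} \<times> UNIV" by (auto simp: in_lists_conv_set)
    next
      show "\<forall>(w, b)\<in>?T. (w \<in> L) = b" using r0 r1 by auto
    next
      show "\<forall>L'\<in>?C - {L'. R0 L' L}. ?T \<subseteq> lists {a} \<times> UNIV \<and> (\<forall>(v, b)\<in>?T. (v \<in> L') = b) \<longrightarrow> L' = L"
      proof (intro ballI impI)
      fix L' assume L'C: "L' \<in> ?C - {L'. R0 L' L}"
        and c: "?T \<subseteq> lists {a} \<times> UNIV \<and> (\<forall>(v, b)\<in>?T. (v \<in> L') = b)"
      have in1: "replicate k a \<in> L'" and in2: "replicate (k+m) a \<in> L'" using c by auto
      obtain p' where p': "is_pattern {a} p'" "quasi_regular m p'" "L' = lang {a} p'"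
        using L'C by (auto elim: QR_cases)
      show "L' = L"
      proof (cases "finite L'")
        case True
        then obtain w' where "L' = {w'}" using fin_QR_single[of L' "{a}" m a] L'C by blast
        then have "replicate k a = replicate (k+m) a" using in1 in2 by simp
        then have "length (replicate k a) = length (replicate (k+m) a)" by metis
        then show ?thesis using m by simp
      next
        case inf': False
        obtain x1 where x1: "Inl x1 \<in> set p'"
          using lang_novar[of p' "{a}"] p'(3) inf' by (metis finite.emptyI finite.insertI)
        define k' where "k' = length (subst_app (\<lambda>_. []) p')"
        have Lk': "L' = {replicate (k' + m*j) a | j. True}"
          using unary_lang[OF x1 p'(2) p'(1)] p'(3) k'_def by simp
        from in1 obtain j0 where "replicate k a = replicate (k' + m*j0) a" unfolding Lk' by blast
        then have "length (replicate k a) = length (replicate (k' + m*j0) a)" by metis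
        then have kj: "k = k' + m*j0" by simp
        have "L \<subseteq> L'"
        proof
          fix v assume "v \<in> L"
          then obtain j where "v = replicate (k + m*j) a" unfolding Lk by blast
          then have "v = replicate (k' + m*(j0+j)) a" using kj by (simp add: algebra_simps)
          then show "v \<in> L'" unfolding Lk' by blast
        qed
        moreover have "\<not> L \<subset> L'" using L'C inf' unfolding R0_def by auto
        ultimately show ?thesis by blast
      qed
      qed
    qed
    moreover have "card ?T \<le> 2" by (simp add: card_insert_if)
    ultimately show ?thesis using TD_le by blast
  qed
qed

lemma PBTD_ge2:
  fixes Sig :: "'a set"
  assumes "a \<in> Sig" "m \<ge> 1"
  shows "2 \<le> PBTD Sig (QR_class Sig m)"
  unfolding PBTD_def
proof (rule INF_greatest)
  fix R assume "R \<in> {R. strict_po_on (QR_class Sig m) R}"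
  then have po: "strict_po_on (QR_class Sig m) R" by simp
  obtain L where L: "L \<in> QR_class Sig m" "\<not> TD Sig (QR_class Sig m - {L'. R L' L}) L < 2"
    using lower[OF assms po] by blast
  have "2 \<le> TD Sig (QR_class Sig m - {L'. R L' L}) L" using L(2) by (simp add: not_less)
  also have "\<dots> \<le> PBTD_ord Sig (QR_class Sig m) R"
    unfolding PBTD_ord_def using L(1) by (rule SUP_upper)
  finally show "2 \<le> PBTD_ord Sig (QR_class Sig m) R" .
qed

theorem mainTheorem10:
  fixes Sig :: "'a set" and m :: nat
  assumes "m \<ge> 1"
  shows "(card Sig = 1 \<longrightarrow> PBTD Sig (QR_class Sig m) = 2)
       \<and> ((card Sig \<ge> 2 \<or> (infinite Sig \<and> countable Sig))
            \<longrightarrow> PBTD Sig (QR_class Sig m) \<ge> 2)"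
proof (intro conjI impI)
  assume "card Sig = 1"
  then obtain a where a: "Sig = {a}" by (rule card_1_singletonE)
  have "PBTD Sig (QR_class Sig m) \<le> PBTD_ord Sig (QR_class Sig m) R0"
    unfolding PBTD_def by (rule INF_lower) (simp add: R0_spo)
  also have "\<dots> \<le> 2" unfolding a by (rule upper[OF assms])
  finally have "PBTD Sig (QR_class Sig m) \<le> 2" .
  moreover have "2 \<le> PBTD Sig (QR_class Sig m)" using PBTD_ge2[OF _ assms, of a] a by simp
  ultimately show "PBTD Sig (QR_class Sig m) = 2" by (rule antisym)
next
  assume h: "card Sig \<ge> 2 \<or> (infinite Sig \<and> countable Sig)"
  have "Sig \<noteq> {}"
  proof
    assume "Sig = {}"
    with h show False by simp
  qed
  then obtain a where aS: "a \<in> Sig" by blast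
  show "PBTD Sig (QR_class Sig m) \<ge> 2" using PBTD_ge2[OF aS assms] .
qed

end
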